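(* Under the standing assumptions below, let $\{I_j^n\}\in\mathcal C_n$ for every $n$ be such that the measures $\mu_{\{I_j^n\}}$ converge weak* in $\mathcal P(\overline I)$ to a measure $\mu$, and let $f\in L^1(I)$ be the density of the absolutely continuous part of $\mu$ with respect to Lebesgue measure. If $x_0\in I$ is a Lebesgue point of $f$ with $f(x_0)>0$, then $$\lim_{J\downarrow x_0}\frac{\mathcal L(I^a\cap J)}{\mathcal L(J)}=1\qquad\text{and}\qquad\lim_{J\downarrow x_0}\frac{\mathcal L(I^b\cap J)}{\mathcal L(J)}=0,$$ the limits being over open intervals $J$ with $x_0\in J$ shrinking to $x_0$.
   Context: $I=(0,1)$. $\mathcal C_n$ is the set of partitions $\{I_j\}_{j=1}^n$ of $I$ with $I_j=(x_{j-1},x_j)$, $0=x_0\le x_1\le\dots\le x_n=1$ (some intervals may be empty). The associated probability measure on $\overline I=[0,1]$ is $\mu_{\{I_j\}}=\frac1n\sum_{j:x_{j-1}<x_j}\frac{1}{\mathcal L(I_j)}\chi_{I_j}\mathcal L+\frac1n\sum_{j:x_{j-1}=x_j}\delta_{x_j}$, $\mathcal L$ Lebesgue measure. Weak* convergence is against continuous functions on $[0,1]$. Accumulation points: given $\{I_j^n\}\in\mathcal C_n$ for all $n$, a point $x\in I$ is an accumulation point of the partitions if for every $n$ there is an index $j_n$ with $x\in\overline{I^n_{j_n}}$ and $\lim_{n\to\infty}\mathcal L(I^n_{j_n})=0$. $I^a$ denotes the set of all accumulation points and $I^b:=I\setminus I^a$. *)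

theory Defs
  imports "HOL-Probability.Probability"
begin

text \<open>A partition in C_n is encoded by its endpoints x 0, ..., x n
  (x j = x_j), with 0 = x_0 \<le> x_1 \<le> ... \<le> x_n = 1; the j-th interval is
  I_j = (x (j-1), x j) for 1 \<le> j \<le> n.\<close>
definition is_partition :: "nat \<Rightarrow> (nat \<Rightarrow> real) \<Rightarrow> bool" where
  "is_partition n x \<longleftrightarrow> x 0 = 0 \<and> x n = 1 \<and> (\<forall>j<n. x j \<le> x (Suc j))"

text \<open>Integral of a continuous function g against the probability measure
  mu_{I_j} associated with the partition x in C_n.\<close>
definition part_integral :: "nat \<Rightarrow> (nat \<Rightarrow> real) \<Rightarrow> (real \<Rightarrow> real) \<Rightarrow> real" where
  "part_integral n x g =
     (1 / real n) * (\<Sum>j=1..n.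
        if x (j - 1) < x j then integral {x (j - 1)..x j} g / (x j - x (j - 1))
        else g (x j))"

definition accum_points :: "(nat \<Rightarrow> nat \<Rightarrow> real) \<Rightarrow> real set" where
  "accum_points P = {x \<in> {0<..<1}. \<exists>jn :: nat \<Rightarrow> nat.
      (\<forall>n\<ge>1. 1 \<le> jn n \<and> jn n \<le> n \<and> x \<in> closure {P n (jn n - 1)<..<P n (jn n)}) \<and>
      ((\<lambda>n. P n (jn n) - P n (jn n - 1)) \<longlonglongrightarrow> 0)}"

definition nonaccum_points :: "(nat \<Rightarrow> nat \<Rightarrow> real) \<Rightarrow> real set" where
  "nonaccum_points P = {0<..<1} - accum_points P"

definition lebesgue_point :: "(real \<Rightarrow> real) \<Rightarrow> real \<Rightarrow> bool" where
  "lebesgue_point f x0 \<longleftrightarrow>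
     ((\<lambda>r. (1 / (2 * r)) * (LBINT y : {x0 - r..x0 + r}. \<bar>f y - f x0\<bar>)) \<longlongrightarrow> 0) (at_right 0)"

definition density_tends :: "real set \<Rightarrow> real \<Rightarrow> real \<Rightarrow> bool" where
  "density_tends S x0 c \<longleftrightarrow>
     (\<forall>e>0. \<exists>d>0. \<forall>a b. a < x0 \<and> x0 < b \<and> b - a < d \<longrightarrow>
        \<bar>measure lebesgue (S \<inter> {a<..<b}) / (b - a) - c\<bar> < e)"

end

theory Submission
  imports Defs
begin


lemma part_mono:
  assumes "is_partition n x" "i \<le> k" "k \<le> n" shows "x i \<le> x k"
  using assms(2,3)
proof (induction k)
  case 0 then show ?case by simp
next
  case (Suc k)
  show ?case
  proof (cases "i = Suc k")
    case True then show ?thesis by simp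
  next
    case False
    then have "i \<le> k" using Suc by simp
    then have "x i \<le> x k" using Suc by simp
    also have "x k \<le> x (Suc k)" using assms(1) Suc(3) unfolding is_partition_def by simp
    finally show ?thesis .
  qed
qed

lemma part_range:
  assumes "is_partition n x" "i \<le> n" shows "0 \<le> x i" "x i \<le> 1"
  using part_mono[OF assms(1), of 0 i] part_mono[OF assms(1), of i n] assms
  unfolding is_partition_def by auto

definition valid :: "(nat \<Rightarrow> real) \<Rightarrow> nat \<Rightarrow> real \<Rightarrow> nat \<Rightarrow> bool" where
  "valid x n y j \<longleftrightarrow> 1 \<le> j \<and> j \<le> n \<and> x (j-1) < x j \<and> x (j-1) \<le> y \<and> y \<le> x j"

lemma valid_closure:
  "(1 \<le> j \<and> j \<le> n \<and> y \<in> closure {x (j-1)<..<x j}) \<longleftrightarrow> valid x n y j"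
proof (cases "x (j-1) < x j")
  case True then show ?thesis unfolding valid_def by auto
next
  case False then have "{x (j-1)<..<x j} = {}" by auto
  then show ?thesis using False unfolding valid_def by auto
qed

lemma part_cover:
  assumes "is_partition n x" "0 < y" "y \<le> 1"
  shows "\<exists>j. valid x n y j"
proof -
  define j where "j = (LEAST j. y \<le> x j)"
  have ex: "y \<le> x n" using assms unfolding is_partition_def by simp
  have yj: "y \<le> x j" unfolding j_def by (rule LeastI[of _ n], rule ex)
  have jn: "j \<le> n" unfolding j_def by (rule Least_le, rule ex)
  have j0: "j \<noteq> 0"
  proof
    assume "j = 0" with yj assms show False unfolding is_partition_def by simp
  qed
  have "\<not> y \<le> x (j-1)" unfolding j_def
    by (rule not_less_Least) (use j0 j_def in auto)
  then show ?thesis using yj jn j0 unfolding valid_def by (intro exI[of _ j]) auto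
qed

definition lmin :: "(nat \<Rightarrow> real) \<Rightarrow> nat \<Rightarrow> real \<Rightarrow> real" where
  "lmin x n y = Min ((\<lambda>j. x j - x (j-1)) ` {j. valid x n y j})"

lemma valid_finite: "finite {j. valid x n y j}"
  by (rule finite_subset[of _ "{1..n}"]) (auto simp: valid_def)

lemma lmin_le: "valid x n y j \<Longrightarrow> lmin x n y \<le> x j - x (j-1)"
  unfolding lmin_def by (rule Min_le) (use valid_finite in auto)

lemma lmin_attained:
  assumes "\<exists>j. valid x n y j"
  shows "\<exists>j. valid x n y j \<and> x j - x (j-1) = lmin x n y"
proof -
  have "lmin x n y \<in> (\<lambda>j. x j - x (j-1)) ` {j. valid x n y j}"
    unfolding lmin_def by (rule Min_in) (use valid_finite assms in auto)
  then show ?thesis by auto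
qed

lemma lmin_pos: "\<exists>j. valid x n y j \<Longrightarrow> 0 < lmin x n y"
  using lmin_attained[of x n y] by (auto simp: valid_def)

definition acond :: "(nat \<Rightarrow> nat \<Rightarrow> real) \<Rightarrow> real \<Rightarrow> bool" where
  "acond P y \<longleftrightarrow> (\<forall>k::nat. \<exists>N::nat. \<forall>n\<ge>N. \<exists>j\<in>{1..n}. (P n (j-1) < P n j \<and> P n (j-1) \<le> y \<and> y \<le> P n j) \<and> P n j - P n (j-1) < 1/(real k+1))"

lemma L1:
  assumes part: "\<And>n. n \<ge> 1 \<Longrightarrow> is_partition n (P n)" and y: "y \<in> {0<..<1}"
    and lim: "(\<lambda>n. lmin (P n) n y) \<longlonglongrightarrow> 0"
  shows "y \<in> accum_points P"
proof -
  define jn where "jn n = (SOME j. valid (P n) n y j \<and> P n j - P n (j-1) = lmin (P n) n y)" for n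
  have jn: "valid (P n) n y (jn n) \<and> P n (jn n) - P n (jn n - 1) = lmin (P n) n y" if "n \<ge> 1" for n
    unfolding jn_def by (rule someI_ex, rule lmin_attained, rule part_cover[OF part[OF that]]) (use y in auto)
  have "(\<lambda>n. P n (jn n) - P n (jn n - 1)) \<longlonglongrightarrow> 0"
    by (rule Lim_transform_eventually[OF lim]) (use jn in \<open>auto simp: eventually_sequentially intro!: exI[of _ 1]\<close>)
  moreover have "\<forall>n\<ge>1. 1 \<le> jn n \<and> jn n \<le> n \<and> y \<in> closure {P n (jn n - 1)<..<P n (jn n)}"
    using jn valid_closure by blast
  ultimately show ?thesis using y unfolding accum_points_def by blast
qed

lemma L3:
  assumes "y \<in> accum_points P" shows "acond P y"
proof -
  obtain jn where jn: "\<forall>n\<ge>1. 1 \<le> jn n \<and> jn n \<le> n \<and> y \<in> closure {P n (jn n - 1)<..<P n (jn n)}"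
    and lim: "(\<lambda>n. P n (jn n) - P n (jn n - 1)) \<longlonglongrightarrow> 0"
    using assms unfolding accum_points_def by blast
  show ?thesis unfolding acond_def
  proof
    fix k :: nat
    have "1/(real k+1) > 0" by simp
    from lim[THEN order_tendstoD(2), OF this] obtain N where
      N: "\<forall>n\<ge>N. P n (jn n) - P n (jn n - 1) < 1/(real k+1)"
      unfolding eventually_sequentially by blast
    show "\<exists>N. \<forall>n\<ge>N. \<exists>j\<in>{1..n}. (P n (j-1) < P n j \<and> P n (j-1) \<le> y \<and> y \<le> P n j) \<and> P n j - P n (j-1) < 1/(real k+1)"
    proof (intro exI[of _ "max N 1"] allI impI)
      fix n assume n: "max N 1 \<le> n"
      then have "valid (P n) n y (jn n)" using jn valid_closure by auto
      then show "\<exists>j\<in>{1..n}. (P n (j-1) < P n j \<and> P n (j-1) \<le> y \<and> y \<le> P n j) \<and> P n j - P n (j-1) < 1/(real k+1)"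
        using N n unfolding valid_def by (intro bexI[of _ "jn n"]) auto
    qed
  qed
qed

lemma L2:
  assumes part: "\<And>n. n \<ge> 1 \<Longrightarrow> is_partition n (P n)" and y: "y \<in> {0<..<1}"
    and c: "acond P y"
  shows "(\<lambda>n. lmin (P n) n y) \<longlonglongrightarrow> 0"
proof (rule LIMSEQ_I)
  fix r :: real assume r: "0 < r"
  obtain k where k: "inverse (real (Suc k)) < r" using reals_Archimedean[OF r] by blast
  obtain N where N: "\<forall>n\<ge>N. \<exists>j\<in>{1..n}. (P n (j-1) < P n j \<and> P n (j-1) \<le> y \<and> y \<le> P n j) \<and> P n j - P n (j-1) < 1/(real k+1)"
    using c unfolding acond_def by blast
  show "\<exists>no. \<forall>n\<ge>no. norm (lmin (P n) n y - 0) < r"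
  proof (intro exI[of _ N] allI impI)
    fix n assume n: "N \<le> n"
    then obtain j where j: "j \<in> {1..n}" "P n (j-1) < P n j \<and> P n (j-1) \<le> y \<and> y \<le> P n j"
       "P n j - P n (j-1) < 1/(real k+1)" using N by blast
    then have v: "valid (P n) n y j" unfolding valid_def by auto
    have "lmin (P n) n y \<le> P n j - P n (j-1)" by (rule lmin_le[OF v])
    moreover have "0 < lmin (P n) n y" using lmin_pos v by blast
    moreover have "1/(real k+1) = inverse (real (Suc k))" by (simp add: field_simps)
    ultimately show "norm (lmin (P n) n y - 0) < r" using j k by auto
  qed
qed

lemma accum_eq:
  assumes part: "\<And>n. n \<ge> 1 \<Longrightarrow> is_partition n (P n)"
  shows "accum_points P = {y\<in>{0<..<1}. acond P y}"
proof
  show "accum_points P \<subseteq> {y\<in>{0<..<1}. acond P y}"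
    using L3 by (auto simp: accum_points_def)
  show "{y\<in>{0<..<1}. acond P y} \<subseteq> accum_points P"
    using L1[OF part] L2[OF part] by auto
qed

lemma accum_borel:
  assumes part: "\<And>n. n \<ge> 1 \<Longrightarrow> is_partition n (P n)"
  shows "accum_points P \<in> sets borel"
proof -
  have "{y\<in>{0<..<1::real}. acond P y} \<in> sets borel" unfolding acond_def by measurable
  then show ?thesis using accum_eq[OF part] by simp
qed



definition tent :: "real \<Rightarrow> real \<Rightarrow> real \<Rightarrow> real" where
  "tent \<alpha> \<beta> y = max 0 (min (y - \<alpha>) (\<beta> - y))"

lemma tent_cont: "continuous_on S (tent \<alpha> \<beta>)"
  unfolding tent_def by (intro continuous_intros)

lemma tent_bounds: "\<alpha> < \<beta> \<Longrightarrow> 0 \<le> tent \<alpha> \<beta> y \<and> tent \<alpha> \<beta> y \<le> \<beta> - \<alpha>"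
  unfolding tent_def by (auto simp: max_def min_def)

lemma tent_zero: "y \<le> \<alpha> \<or> \<beta> \<le> y \<Longrightarrow> tent \<alpha> \<beta> y = 0"
  unfolding tent_def by (auto simp: max_def min_def)

lemma tent_pos: "\<alpha> < y \<Longrightarrow> y < \<beta> \<Longrightarrow> tent \<alpha> \<beta> y > 0"
  unfolding tent_def by (auto simp: max_def min_def)

lemma tent_meas[measurable]: "tent \<alpha> \<beta> \<in> borel_measurable borel"
  unfolding tent_def by measurable

lemma part_integral_tent:
  assumes part: "is_partition n x" and j: "1 \<le> j" "j \<le> n"
    and ab: "x (j-1) < \<alpha>" "\<alpha> < \<beta>" "\<beta> < x j"
  shows "0 \<le> part_integral n x (tent \<alpha> \<beta>) \<and> part_integral n x (tent \<alpha> \<beta>) \<le> (\<beta> - \<alpha>) / real n"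
proof -
  let ?g = "tent \<alpha> \<beta>"
  define t where "t i = (if x (i - 1) < x i then integral {x (i - 1)..x i} ?g / (x i - x (i - 1)) else ?g (x i))" for i
  have int: "?g integrable_on {a..b}" for a b
    by (rule integrable_continuous_interval, rule tent_cont)
  have z: "t i = 0" if i: "i \<in> {1..n}" "i \<noteq> j" for i
  proof -
    have zero_on: "\<forall>y\<in>{x (i-1)..x i}. ?g y = 0"
    proof (cases "i < j")
      case True
      then have "x i \<le> x (j-1)" using part_mono[OF part, of i "j-1"] j by auto
      then show ?thesis using ab by (auto intro!: tent_zero)
    next
      case False
      then have "x j \<le> x (i-1)" using part_mono[OF part, of j "i-1"] i j by auto
      then show ?thesis using ab by (auto intro!: tent_zero)
    qed
    have "integral {x (i - 1)..x i} ?g = integral {x (i - 1)..x i} (\<lambda>_. 0)"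
      by (rule integral_cong) (use zero_on in auto)
    moreover have "x (i-1) \<le> x i" using part_mono[OF part, of "i-1" i] i by auto
    ultimately show ?thesis unfolding t_def using zero_on by auto
  qed
  have sum: "(\<Sum>i=1..n. t i) = t j"
    using sum.mono_neutral_right[of "{1..n}" "{j}" t] z j by auto
  have lt: "x (j-1) < x j" using ab by simp
  have I0: "0 \<le> integral {x (j - 1)..x j} ?g"
    by (rule integral_nonneg[OF int]) (use tent_bounds ab in auto)
  have "integral {x (j - 1)..x j} ?g \<le> integral {x (j - 1)..x j} (\<lambda>_. \<beta> - \<alpha>)"
    by (rule integral_le[OF int]) (use tent_bounds ab in auto)
  also have "\<dots> = (x j - x (j-1)) * (\<beta> - \<alpha>)" using lt by simp
  finally have I1: "integral {x (j - 1)..x j} ?g \<le> (x j - x (j-1)) * (\<beta> - \<alpha>)" .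
  have tj: "0 \<le> t j \<and> t j \<le> \<beta> - \<alpha>"
    using I0 I1 lt unfolding t_def by (auto simp: field_simps)
  have pi: "part_integral n x ?g = t j / real n"
    unfolding part_integral_def t_def[symmetric] sum by simp
  show ?thesis using tj j unfolding pi by (auto simp: divide_right_mono)
qed



locale lsetup =
  fixes P :: "nat \<Rightarrow> nat \<Rightarrow> real" and \<mu> :: "real measure"
    and f :: "real \<Rightarrow> real" and N :: "real set"
  assumes part: "\<And>n. n \<ge> 1 \<Longrightarrow> is_partition n (P n)"
    and prob: "prob_space \<mu>"
    and sets_mu: "sets \<mu> = sets (restrict_space borel {0..1})"
    and space_mu: "space \<mu> = {0..1}"
    and weak: "\<And>g. continuous_on {0..1} g \<Longrightarrow>
                 (\<lambda>n. part_integral n (P n) g) \<longlonglongrightarrow> integral\<^sup>L \<mu> g"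
    and f_meas: "f \<in> borel_measurable borel"
    and f_nonneg: "AE y in lborel. y \<in> {0<..<1} \<longrightarrow> f y \<ge> 0"
    and f_int: "set_integrable lborel {0<..<1} f"
    and N_borel: "N \<in> sets borel" and N_sub: "N \<subseteq> {0..1}"
    and N_null: "emeasure lborel N = 0"
    and decomp: "\<And>A. A \<in> sets \<mu> \<Longrightarrow>
                   emeasure \<mu> A = (\<integral>\<^sup>+ y. ennreal (f y) * indicator (A - N) y \<partial>lborel) + emeasure \<mu> (A \<inter> N)"
begin

lemma borel_mu: "g \<in> borel_measurable borel \<Longrightarrow> g \<in> borel_measurable \<mu>"
  for g :: "real \<Rightarrow> real"
proof -
  assume g: "g \<in> borel_measurable borel"
  have "g \<in> borel_measurable (restrict_space borel {0..1})"
    by (rule measurable_restrict_space1) (rule g)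
  then show ?thesis using measurable_cong_sets[OF sets_mu refl, of borel] by blast
qed

lemma ivl_sets:
  assumes "0 \<le> c" "d \<le> (1::real)" shows "{c<..<d} \<in> sets \<mu>"
proof -
  have o: "{0..1::real} \<inter> space borel \<in> sets borel" by simp
  have "{c<..<d} \<subseteq> {0..1}" using assms by auto
  then show ?thesis unfolding sets_mu sets_restrict_space_iff[OF o] by simp
qed

lemma A1:
  fixes \<tau> j :: "nat \<Rightarrow> nat"
  assumes \<tau>: "filterlim \<tau> at_top at_top" and \<tau>1: "\<And>k. 1 \<le> \<tau> k"
    and jv: "\<And>k. 1 \<le> j k \<and> j k \<le> \<tau> k"
    and cl: "(\<lambda>k. P (\<tau> k) (j k - 1)) \<longlonglongrightarrow> c" and dl: "(\<lambda>k. P (\<tau> k) (j k)) \<longlonglongrightarrow> d"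
    and ab: "c < \<alpha>" "\<alpha> < \<beta>" "\<beta> < d"
  shows "integral\<^sup>L \<mu> (tent \<alpha> \<beta>) = 0"
proof -
  let ?s = "\<lambda>k. part_integral (\<tau> k) (P (\<tau> k)) (tent \<alpha> \<beta>)"
  have l1: "?s \<longlonglongrightarrow> integral\<^sup>L \<mu> (tent \<alpha> \<beta>)"
    using filterlim_compose[OF weak[OF tent_cont] \<tau>] by (simp add: o_def)
  have ev1: "eventually (\<lambda>k. P (\<tau> k) (j k - 1) < \<alpha>) sequentially"
    using cl ab by (auto dest: order_tendstoD)
  have ev2: "eventually (\<lambda>k. \<beta> < P (\<tau> k) (j k)) sequentially"
    using dl ab by (auto dest: order_tendstoD)
  have ev: "eventually (\<lambda>k. 0 \<le> ?s k \<and> ?s k \<le> (\<beta> - \<alpha>) / real (\<tau> k)) sequentially"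
    using ev1 ev2
  proof eventually_elim
    case (elim k)
    show ?case by (rule part_integral_tent[OF part[OF \<tau>1]]) (use jv[of k] elim ab in auto)
  qed
  have "filterlim (\<lambda>k. real (\<tau> k)) at_top sequentially"
    using filterlim_compose[OF filterlim_real_sequentially \<tau>] by simp
  then have h0: "(\<lambda>k. (\<beta> - \<alpha>) / real (\<tau> k)) \<longlonglongrightarrow> 0"
    by (intro tendsto_divide_0[OF tendsto_const] filterlim_at_top_imp_at_infinity)
  have l2: "?s \<longlonglongrightarrow> 0"
    by (rule tendsto_sandwich[OF _ _ tendsto_const h0]) (use ev in \<open>auto elim: eventually_mono\<close>)
  show ?thesis using LIMSEQ_unique[OF l1 l2] .
qed

lemma A2:
  assumes ab: "\<alpha> < \<beta>" and z: "integral\<^sup>L \<mu> (tent \<alpha> \<beta>) = 0"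
  shows "AE y in \<mu>. y \<notin> {\<alpha><..<\<beta>}"
proof -
  interpret prob_space \<mu> by (rule prob)
  have m: "tent \<alpha> \<beta> \<in> borel_measurable \<mu>" by (rule borel_mu) simp
  have i: "integrable \<mu> (tent \<alpha> \<beta>)"
    by (rule integrable_const_bound[where B="\<beta> - \<alpha>"]) (use tent_bounds[OF ab] m in auto)
  have "AE y in \<mu>. tent \<alpha> \<beta> y = 0"
    using integral_nonneg_eq_0_iff_AE[OF i] z tent_bounds[OF ab] by auto
  then show ?thesis by eventually_elim (auto dest: tent_pos)
qed

lemma A3:
  fixes c d :: real
  assumes cd: "c < d" "0 \<le> c" "d \<le> 1"
    and H: "\<And>\<alpha> \<beta>. c < \<alpha> \<Longrightarrow> \<alpha> < \<beta> \<Longrightarrow> \<beta> < d \<Longrightarrow> integral\<^sup>L \<mu> (tent \<alpha> \<beta>) = 0"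
  shows "emeasure \<mu> {c<..<d} = 0"
proof -
  define e where "e m = (d - c) / (real m + 3)" for m :: nat
  have e: "0 < e m" "e m < (d - c) / 2" for m
  proof -
    show "0 < e m" using cd by (auto simp: e_def)
    show "e m < (d - c) / 2" unfolding e_def
      by (rule divide_strict_left_mono) (use cd in auto)
  qed
  have "AE y in \<mu>. \<forall>m. y \<notin> {c + e m<..<d - e m}"
  proof (rule AE_all_countable[THEN iffD2], rule allI)
    fix m show "AE y in \<mu>. y \<notin> {c + e m<..<d - e m}"
    proof (rule A2)
      have "0 < e m" "e m < (d - c) / 2" using e by auto
      then show ab: "c + e m < d - e m" by (simp add: field_simps)
      show "integral\<^sup>L \<mu> (tent (c + e m) (d - e m)) = 0"
        by (rule H) (use \<open>0 < e m\<close> ab in auto)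
    qed
  qed
  then have ae: "AE y in \<mu>. y \<notin> {c<..<d}"
  proof eventually_elim
    case (elim y)
    show ?case
    proof
      assume y: "y \<in> {c<..<d}"
      have "(\<lambda>m. e m) \<longlonglongrightarrow> 0" unfolding e_def
        by (intro tendsto_divide_0[OF tendsto_const] filterlim_at_top_imp_at_infinity
             filterlim_at_top_mono[OF filterlim_real_sequentially]) auto
      moreover have "0 < min (y - c) (d - y)" using y by auto
      ultimately obtain m where "e m < min (y - c) (d - y)"
        using order_tendstoD(2)[of e 0 sequentially "min (y - c) (d - y)"] 
        unfolding eventually_sequentially by auto
      then have "y \<in> {c + e m<..<d - e m}" using y by auto
      then show False using elim by blast
    qed
  qed
  have s: "{c<..<d} \<in> sets \<mu>" by (rule ivl_sets) (use cd in auto)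
  have eq: "{y \<in> space \<mu>. \<not> y \<notin> {c<..<d}} = {c<..<d}" using cd space_mu by auto
  show ?thesis using AE_iff_measurable[OF s eq] ae by simp
qed

lemma A4:
  assumes cd: "c < d" "0 \<le> c" "d \<le> 1" and z: "emeasure \<mu> {c<..<d} = 0"
  shows "AE y in lborel. y \<in> {c<..<d} \<longrightarrow> f y = 0"
proof -
  have s: "{c<..<d} \<in> sets \<mu>" by (rule ivl_sets) (use cd in auto)
  have "(\<integral>\<^sup>+ y. ennreal (f y) * indicator ({c<..<d} - N) y \<partial>lborel) = 0"
    using decomp[OF s] z by simp
  then have "AE y in lborel. ennreal (f y) * indicator ({c<..<d} - N) y = 0"
    using f_meas N_borel by (subst nn_integral_0_iff_AE[symmetric]) auto
  moreover have "AE y in lborel. y \<notin> N"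
    using N_null N_borel by (intro AE_not_in) (auto simp: null_sets_def)
  ultimately show ?thesis using f_nonneg
  proof eventually_elim
    case (elim y)
    show ?case
    proof
      assume y: "y \<in> {c<..<d}"
      then have "y \<in> {c<..<d} - N" using elim(2) by blast
      then have "ennreal (f y) = 0" using elim(1) by simp
      then have "f y \<le> 0" using ennreal_eq_0_iff by blast
      moreover have "y \<in> {0<..<1}" using y cd by auto
      ultimately show "f y = 0" using elim(3) by simp
    qed
  qed
qed

end


context lsetup begin

lemma A5:
  assumes y: "y \<in> {0<..<1}" and na: "y \<notin> accum_points P"
  shows "\<exists>c d. c < d \<and> 0 \<le> c \<and> d \<le> 1 \<and> c \<le> y \<and> y \<le> d \<and> emeasure \<mu> {c<..<d} = 0"
proof -
  have ex: "\<exists>j. valid (P n) n y j" if "n \<ge> 1" for n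
    by (rule part_cover[OF part[OF that]]) (use y in auto)
  have nl: "\<not> (\<lambda>n. lmin (P n) n y) \<longlonglongrightarrow> 0" using L1[OF part y] na by blast
  have "\<exists>\<delta>>0. \<forall>N. \<exists>n\<ge>N. \<delta> \<le> lmin (P n) n y"
  proof (rule ccontr)
    assume "\<not> ?thesis"
    then have H: "\<And>\<delta>. \<delta> > 0 \<Longrightarrow> \<exists>N. \<forall>n\<ge>N. lmin (P n) n y < \<delta>" by (meson not_le)
    have "(\<lambda>n. lmin (P n) n y) \<longlonglongrightarrow> 0"
    proof (rule LIMSEQ_I)
      fix r :: real assume "0 < r"
      then obtain M where M: "\<forall>n\<ge>M. lmin (P n) n y < r" using H by blast
      show "\<exists>no. \<forall>n\<ge>no. norm (lmin (P n) n y - 0) < r"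
      proof (intro exI[of _ "max M 1"] allI impI)
        fix n assume n: "max M 1 \<le> n"
        then have "0 < lmin (P n) n y" using lmin_pos ex by auto
        then show "norm (lmin (P n) n y - 0) < r" using M n by auto
      qed
    qed
    then show False using nl by blast
  qed
  then obtain \<delta> where \<delta>: "\<delta> > 0" "\<And>M. \<exists>n\<ge>M. \<delta> \<le> lmin (P n) n y" by blast
  define \<sigma> where "\<sigma> k = (SOME n. n \<ge> k + 1 \<and> \<delta> \<le> lmin (P n) n y)" for k
  have \<sigma>: "\<sigma> k \<ge> k + 1 \<and> \<delta> \<le> lmin (P (\<sigma> k)) (\<sigma> k) y" for k
    unfolding \<sigma>_def by (rule someI_ex) (use \<delta>(2)[of "k+1"] in auto)
  define j where "j k = (SOME i. valid (P (\<sigma> k)) (\<sigma> k) y i \<and> P (\<sigma> k) i - P (\<sigma> k) (i-1) = lmin (P (\<sigma> k)) (\<sigma> k) y)" for k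
  have j: "valid (P (\<sigma> k)) (\<sigma> k) y (j k) \<and> P (\<sigma> k) (j k) - P (\<sigma> k) (j k - 1) = lmin (P (\<sigma> k)) (\<sigma> k) y" for k
    unfolding j_def by (rule someI_ex, rule lmin_attained, rule ex) (use \<sigma>[of k] in auto)
  define cs where "cs k = P (\<sigma> k) (j k - 1)" for k
  define ds where "ds k = P (\<sigma> k) (j k)" for k
  have props: "0 \<le> cs k \<and> ds k \<le> 1 \<and> cs k \<le> y \<and> y \<le> ds k \<and> \<delta> \<le> ds k - cs k \<and> cs k \<le> 1 \<and> 0 \<le> ds k" for k
  proof -
    have p: "is_partition (\<sigma> k) (P (\<sigma> k))" using part \<sigma>[of k] by auto
    have v: "valid (P (\<sigma> k)) (\<sigma> k) y (j k)" using j by blast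
    then have jj: "j k \<le> \<sigma> k" "j k - 1 \<le> \<sigma> k" unfolding valid_def by auto
    show ?thesis using part_range[OF p jj(1)] part_range[OF p jj(2)] v j[of k] \<sigma>[of k]
      unfolding cs_def ds_def valid_def by auto
  qed
  let ?S = "{0..1::real} \<times> {0..1::real}"
  have sc: "seq_compact ?S" by (intro compact_imp_seq_compact compact_Times compact_Icc)
  have inS: "\<forall>k. (cs k, ds k) \<in> ?S" using props by auto
  obtain l r where l: "l \<in> ?S" and r: "strict_mono (r :: nat \<Rightarrow> nat)"
    and lim: "((\<lambda>k. (cs k, ds k)) \<circ> r) \<longlonglongrightarrow> l"
    using seq_compactE[OF sc inS] by blast
  obtain c d where l_eq: "l = (c, d)" by (cases l)
  have cl: "(\<lambda>k. cs (r k)) \<longlonglongrightarrow> c" using tendsto_fst[OF lim] l_eq by (simp add: o_def)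
  have dl: "(\<lambda>k. ds (r k)) \<longlonglongrightarrow> d" using tendsto_snd[OF lim] l_eq by (simp add: o_def)
  have cd01: "0 \<le> c" "d \<le> 1" using l l_eq by auto
  have cy: "c \<le> y" by (rule LIMSEQ_le_const2[OF cl]) (use props in auto)
  have yd: "y \<le> d" by (rule LIMSEQ_le_const[OF dl]) (use props in auto)
  have "\<delta> \<le> d - c" by (rule LIMSEQ_le_const[OF tendsto_diff[OF dl cl]]) (use props in auto)
  then have cd: "c < d" using \<delta>(1) by simp
  have \<tau>: "filterlim (\<lambda>k. \<sigma> (r k)) at_top at_top"
  proof (rule filterlim_at_top_mono[OF filterlim_ident])
    show "\<forall>\<^sub>F x in sequentially. x \<le> \<sigma> (r x)"
      using seq_suble[OF r] \<sigma> by (auto intro: always_eventually order_trans[OF _ Suc_leD])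
  qed
  have "emeasure \<mu> {c<..<d} = 0"
  proof (rule A3[OF cd cd01])
    fix \<alpha> \<beta> assume ab: "c < \<alpha>" "\<alpha> < \<beta>" "\<beta> < d"
    show "integral\<^sup>L \<mu> (tent \<alpha> \<beta>) = 0"
    proof (rule A1[OF \<tau> _ _ _ _ ab, of "\<lambda>k. j (r k)"])
      show "1 \<le> \<sigma> (r k)" for k using \<sigma>[of "r k"] by simp
      show "1 \<le> j (r k) \<and> j (r k) \<le> \<sigma> (r k)" for k using j[of "r k"] unfolding valid_def by simp
      show "(\<lambda>k. P (\<sigma> (r k)) (j (r k) - 1)) \<longlonglongrightarrow> c" using cl unfolding cs_def .
      show "(\<lambda>k. P (\<sigma> (r k)) (j (r k))) \<longlonglongrightarrow> d" using dl unfolding ds_def .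
    qed
  qed
  then show ?thesis using cd cd01 cy yd by blast
qed

end


context lsetup begin

definition Zi :: "real \<Rightarrow> real \<Rightarrow> bool" where
  "Zi c d \<longleftrightarrow> c < d \<and> 0 \<le> c \<and> d \<le> 1 \<and> emeasure \<mu> {c<..<d} = 0"

definition U :: "real set" where "U = {y. \<exists>c d. Zi c d \<and> c < y \<and> y < d}"
definition Cl :: "real set" where "Cl = {x. x \<notin> U \<and> (\<exists>d. Zi x d)}"
definition Cr :: "real set" where "Cr = {x. x \<notin> U \<and> (\<exists>c. Zi c x)}"

lemma Zi_sub:
  assumes "Zi c d" "c \<le> c'" "c' < d'" "d' \<le> d" shows "Zi c' d'"
proof -
  have "emeasure \<mu> {c'<..<d'} \<le> emeasure \<mu> {c<..<d}"
    by (rule emeasure_mono) (use assms ivl_sets[of c d] in \<open>auto simp: Zi_def\<close>)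
  then show ?thesis using assms unfolding Zi_def by auto
qed

lemma U_open: "open U"
proof (subst open_subopen, intro ballI)
  fix y assume "y \<in> U"
  then obtain c d where cd: "Zi c d" "c < y" "y < d" unfolding U_def by blast
  have "{c<..<d} \<subseteq> U"
  proof
    fix z assume "z \<in> {c<..<d}"
    then show "z \<in> U" unfolding U_def using cd(1)
      by (intro CollectI exI[of _ c] exI[of _ d]) auto
  qed
  then show "\<exists>T. open T \<and> y \<in> T \<and> T \<subseteq> U" using cd
    by (intro exI[of _ "{c<..<d}"]) auto
qed

lemma U_borel: "U \<in> sets borel"
  using U_open by simp

lemma U_ae: "AE y in lborel. y \<in> U \<longrightarrow> f y = 0"
proof -
  define Q where "Q = {p :: real \<times> real. fst p \<in> \<rat> \<and> snd p \<in> \<rat> \<and> Zi (fst p) (snd p)}"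
  have "Q \<subseteq> \<rat> \<times> \<rat>" unfolding Q_def by auto
  then have cQ: "countable Q"
    by (rule countable_subset) (intro countable_SIGMA countable_rat)
  have "AE y in lborel. \<forall>p\<in>Q. y \<in> {fst p<..<snd p} \<longrightarrow> f y = 0"
  proof (rule AE_ball_countable[OF cQ, THEN iffD2], rule ballI)
    fix p assume "p \<in> Q"
    then have "Zi (fst p) (snd p)" unfolding Q_def by auto
    then show "AE y in lborel. y \<in> {fst p<..<snd p} \<longrightarrow> f y = 0"
      unfolding Zi_def by (intro A4) auto
  qed
  then show ?thesis
  proof eventually_elim
    case (elim y)
    show ?case
    proof
      assume "y \<in> U"
      then obtain c d where cd: "Zi c d" "c < y" "y < d" unfolding U_def by auto
      obtain q1 where q1: "q1 \<in> \<rat>" "c < q1" "q1 < y" using Rats_dense_in_real[OF cd(2)] by blast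
      obtain q2 where q2: "q2 \<in> \<rat>" "y < q2" "q2 < d" using Rats_dense_in_real[OF cd(3)] by blast
      have "Zi q1 q2" by (rule Zi_sub[OF cd(1)]) (use q1 q2 in auto)
      then have "(q1, q2) \<in> Q" using q1 q2 unfolding Q_def by auto
      then show "f y = 0" using elim q1 q2 by fastforce
    qed
  qed
qed

lemma Cl_countable: "countable Cl"
proof -
  define q where "q x = (SOME q. q \<in> \<rat> \<and> x < q \<and> Zi x q)" for x
  have q: "q x \<in> \<rat> \<and> x < q x \<and> Zi x (q x)" if xC: "x \<in> Cl" for x
  proof -
    obtain d where d: "Zi x d" using xC unfolding Cl_def by auto
    then have "x < d" unfolding Zi_def by auto
    then obtain r where r: "r \<in> \<rat>" "x < r" "r < d" using Rats_dense_in_real by blast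
    have zr: "Zi x r" by (rule Zi_sub[OF d]) (use r in auto)
    show ?thesis unfolding q_def by (rule someI_ex) (use r zr in blast)
  qed
  have inj: "inj_on q Cl"
  proof (rule inj_onI, rule ccontr)
    fix x x' assume xx: "x \<in> Cl" "x' \<in> Cl" "q x = q x'" "x \<noteq> x'"
    have *: False if "a \<in> Cl" "b \<in> Cl" "q a = q b" "a < b" for a b
    proof -
      have "Zi a (q a)" "b < q a" using q[OF that(1)] q[OF that(2)] that(3) by auto
      then have "b \<in> U" using that(4) unfolding U_def by blast
      then show False using that(2) unfolding Cl_def by auto
    qed
    show False using xx *[of x x'] *[of x' x] by (cases "x < x'") auto
  qed
  have "countable (q ` Cl)"
    by (rule countable_subset[OF _ countable_rat]) (use q in auto)
  then show ?thesis using countable_image_inj_on[OF _ inj] by blast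
qed

lemma Cr_countable: "countable Cr"
proof -
  define q where "q x = (SOME q. q \<in> \<rat> \<and> q < x \<and> Zi q x)" for x
  have q: "q x \<in> \<rat> \<and> q x < x \<and> Zi (q x) x" if xC: "x \<in> Cr" for x
  proof -
    obtain c where c: "Zi c x" using xC unfolding Cr_def by auto
    then have "c < x" unfolding Zi_def by auto
    then obtain r where r: "r \<in> \<rat>" "c < r" "r < x" using Rats_dense_in_real by blast
    have zr: "Zi r x" by (rule Zi_sub[OF c]) (use r in auto)
    show ?thesis unfolding q_def by (rule someI_ex) (use r zr in blast)
  qed
  have inj: "inj_on q Cr"
  proof (rule inj_onI, rule ccontr)
    fix x x' assume xx: "x \<in> Cr" "x' \<in> Cr" "q x = q x'" "x \<noteq> x'"
    have *: False if "a \<in> Cr" "b \<in> Cr" "q a = q b" "a < b" for a b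
    proof -
      have "Zi (q b) b" "q b < a" using q[OF that(1)] q[OF that(2)] that(3) by auto
      then have "a \<in> U" using that(4) unfolding U_def by blast
      then show False using that(1) unfolding Cr_def by auto
    qed
    show False using xx *[of x x'] *[of x' x] by (cases "x < x'") auto
  qed
  have "countable (q ` Cr)"
    by (rule countable_subset[OF _ countable_rat]) (use q in auto)
  then show ?thesis using countable_image_inj_on[OF _ inj] by blast
qed

lemma C_ae: "AE y in lborel. y \<notin> Cl \<union> Cr"
  by (rule AE_not_in, rule countable_imp_null_set_lborel) (use Cl_countable Cr_countable in auto)

lemma nonacc_sub:
  assumes "y \<in> {0<..<1}" "y \<notin> accum_points P"
  shows "y \<in> U \<union> Cl \<union> Cr"
proof -
  obtain c d where cd: "c < d" "0 \<le> c" "d \<le> 1" "c \<le> y" "y \<le> d" "emeasure \<mu> {c<..<d} = 0"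
    using A5[OF assms] by blast
  then have z: "Zi c d" unfolding Zi_def by auto
  show ?thesis
  proof (cases "y \<in> U")
    case True then show ?thesis by blast
  next
    case False
    have "\<not> (c < y \<and> y < d)" using z False unfolding U_def by blast
    then have "y = c \<or> y = d" using cd by linarith
    then show ?thesis
    proof
      assume "y = c" then have "y \<in> Cl" using z False unfolding Cl_def by blast
      then show ?thesis by blast
    next
      assume "y = d" then have "y \<in> Cr" using z False unfolding Cr_def by blast
      then show ?thesis by blast
    qed
  qed
qed

end


context lsetup begin

lemma key:
  assumes x0: "x0 \<in> {0<..<1}" and leb: "lebesgue_point f x0" and fpos: "f x0 > 0"
    and e: "e > 0"
  shows "\<exists>d>0. \<forall>a b. a < x0 \<and> x0 < b \<and> b - a < d \<longrightarrow>
      {a<..<b} \<subseteq> {0<..<1} \<and> 0 \<le> measure lebesgue (nonaccum_points P \<inter> {a<..<b})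
      \<and> measure lebesgue (nonaccum_points P \<inter> {a<..<b}) < (b - a) * e
      \<and> measure lebesgue (accum_points P \<inter> {a<..<b}) = (b - a) - measure lebesgue (nonaccum_points P \<inter> {a<..<b})"
proof -
  define \<eta> where "\<eta> = e * f x0 / 4"
  have \<eta>: "\<eta> > 0" using e fpos unfolding \<eta>_def by simp
  define L where "L r = (LBINT y : {x0 - r..x0 + r}. \<bar>f y - f x0\<bar>)" for r
  have "eventually (\<lambda>r. (1 / (2 * r)) * L r < \<eta>) (at_right 0)"
    using order_tendstoD(2)[OF leb[unfolded lebesgue_point_def] \<eta>] unfolding L_def .
  then obtain r0 where r0: "r0 > 0" "\<And>r. 0 < r \<Longrightarrow> r < r0 \<Longrightarrow> (1 / (2 * r)) * L r < \<eta>"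
    unfolding eventually_at_right_field by auto
  define d where "d = min r0 (min x0 (1 - x0))"
  have d: "d > 0" using r0 x0 unfolding d_def by auto
  have A_borel: "accum_points P \<in> sets borel" by (rule accum_borel[OF part])
  have B_eq: "nonaccum_points P = {0<..<1} - accum_points P" unfolding nonaccum_points_def ..
  show ?thesis
  proof (intro exI[of _ d] conjI d allI impI)
    fix a b assume ab: "a < x0 \<and> x0 < b \<and> b - a < d"
    define r where "r = b - a"
    define J where "J = {a<..<b}"
    define K where "K = {x0 - r..x0 + r}"
    define B where "B = nonaccum_points P"
    have r: "0 < r" "r < r0" "r < x0" "r < 1 - x0" using ab unfolding r_def d_def by auto
    have J01: "J \<subseteq> {0<..<1}" using ab r unfolding J_def r_def by auto
    have K01: "K \<subseteq> {0<..<1}" using r unfolding K_def by auto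
    have JK: "J \<subseteq> K" using ab unfolding J_def K_def r_def by auto
    have J_sets: "J \<in> sets lborel" unfolding J_def by simp
    have K_sets: "K \<in> sets lborel" unfolding K_def by simp
    have UJ_sets: "U \<inter> J \<in> sets lborel" using U_borel J_sets by simp
    have BJ_sets: "B \<inter> J \<in> sets lborel" unfolding B_def B_eq J_def using A_borel by simp
    have J_fin: "emeasure lborel J < \<infinity>" unfolding J_def using ab by simp
    have K_fin: "emeasure lborel K < \<infinity>" unfolding K_def using r by simp
    have ae: "AE y in lborel. y \<in> B \<inter> J \<longrightarrow> y \<in> U \<inter> J"
      using C_ae
    proof eventually_elim
      case (elim y)
      show ?case
      proof
        assume y: "y \<in> B \<inter> J"
        then have "y \<in> {0<..<1}" "y \<notin> accum_points P" unfolding B_def B_eq by auto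
        then have "y \<in> U \<union> Cl \<union> Cr" by (rule nonacc_sub)
        then show "y \<in> U \<inter> J" using elim y by auto
      qed
    qed
    have e1: "emeasure lborel (B \<inter> J) \<le> emeasure lborel (U \<inter> J)"
      by (rule emeasure_mono_AE[OF ae UJ_sets])
    have e2: "emeasure lborel (U \<inter> J) < \<infinity>"
      using emeasure_mono[of "U \<inter> J" J lborel] J_sets J_fin by (auto simp: less_le_trans)
    have m1: "measure lborel (B \<inter> J) \<le> measure lborel (U \<inter> J)"
      unfolding measure_def by (rule enn2real_mono[OF e1]) (use e2 in simp)
    let ?g = "\<lambda>y. \<bar>f y - f x0\<bar>"
    have fK: "set_integrable lborel K f"
      by (rule set_integrable_subset[OF f_int K_sets K01])
    have cK: "set_integrable lborel K (\<lambda>_. f x0)"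
      unfolding set_integrable_def using K_sets K_fin by simp
    have gK: "set_integrable lborel K ?g"
      by (rule set_integrable_abs, rule set_integral_diff(1)[OF fK cK])
    have gUJ: "set_integrable lborel (U \<inter> J) ?g"
      by (rule set_integrable_subset[OF gK UJ_sets]) (use JK in auto)
    have cUJ: "set_integrable lborel (U \<inter> J) (\<lambda>_. f x0)"
      by (rule set_integrable_subset[OF cK UJ_sets]) (use JK in auto)
    have i1: "(LINT y:(U \<inter> J)|lborel. f x0) \<le> (LINT y:(U \<inter> J)|lborel. ?g y)"
    proof (rule set_integral_mono_AE[OF cUJ gUJ])
      show "AE y\<in>U \<inter> J in lborel. f x0 \<le> ?g y"
        using U_ae by eventually_elim (use fpos in auto)
    qed
    have i0: "(LINT y:(U \<inter> J)|lborel. f x0) = measure lborel (U \<inter> J) * f x0"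
    proof -
      have "emeasure lborel (U \<inter> J) \<noteq> \<infinity>" using e2 by auto
      from set_integral_const[OF UJ_sets this, of "f x0"] show ?thesis by simp
    qed
    have i2: "(LINT y:(U \<inter> J)|lborel. ?g y) \<le> (LINT y:K|lborel. ?g y)"
      unfolding set_lebesgue_integral_def
    proof (rule integral_mono)
      show "integrable lborel (\<lambda>y. indicator (U \<inter> J) y *\<^sub>R ?g y)"
        using gUJ unfolding set_integrable_def .
      show "integrable lborel (\<lambda>y. indicator K y *\<^sub>R ?g y)"
        using gK unfolding set_integrable_def .
      fix y show "indicator (U \<inter> J) y *\<^sub>R ?g y \<le> indicator K y *\<^sub>R ?g y"
        using JK by (auto simp: indicator_def)
    qed
    have "(1 / (2 * r)) * L r < \<eta>" using r0(2) r by auto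
    then have Lr: "L r < 2 * r * \<eta>" using r by (simp add: field_simps)
    have "measure lborel (U \<inter> J) * f x0 < 2 * r * \<eta>"
      using i0 i1 i2 Lr unfolding L_def K_def by linarith
    then have "measure lborel (U \<inter> J) * f x0 < (r * e / 2) * f x0"
      unfolding \<eta>_def by (simp add: field_simps)
    then have mU: "measure lborel (U \<inter> J) < r * e / 2" using fpos by simp
    have mB: "measure lebesgue (B \<inter> J) = measure lborel (B \<inter> J)"
      using BJ_sets by simp
    have mA: "measure lebesgue (accum_points P \<inter> J) = measure lborel (accum_points P \<inter> J)"
      using A_borel J_sets by simp
    have AJ: "accum_points P \<inter> J = J - (B \<inter> J)"
      using J01 unfolding B_def B_eq by auto
    have "measure lborel (J - (B \<inter> J)) = measure lborel J - measure lborel (B \<inter> J)"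
      by (rule measure_Diff) (use J_fin J_sets BJ_sets in auto)
    moreover have "measure lborel J = r" unfolding J_def r_def using ab by simp
    ultimately have mA2: "measure lebesgue (accum_points P \<inter> J) = r - measure lebesgue (B \<inter> J)"
      using mA mB AJ by simp
    have "0 < r * e" using e r by simp
    then have "measure lebesgue (B \<inter> J) < r * e" using m1 mU mB by linarith
    then show "{a<..<b} \<subseteq> {0<..<1}" "0 \<le> measure lebesgue (nonaccum_points P \<inter> {a<..<b})"
      "measure lebesgue (nonaccum_points P \<inter> {a<..<b}) < (b - a) * e"
      "measure lebesgue (accum_points P \<inter> {a<..<b}) = (b - a) - measure lebesgue (nonaccum_points P \<inter> {a<..<b})"
      using J01 mA2 unfolding J_def B_def r_def by auto
  qed
qed

end


theorem lemma2p4: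
  fixes P :: "nat \<Rightarrow> nat \<Rightarrow> real" and \<mu> :: "real measure"
    and f :: "real \<Rightarrow> real" and N :: "real set" and x0 :: real
  assumes part: "\<And>n. n \<ge> 1 \<Longrightarrow> is_partition n (P n)"
    and prob: "prob_space \<mu>"
    and sets_mu: "sets \<mu> = sets (restrict_space borel {0..1})"
    and space_mu: "space \<mu> = {0..1}"
    and weak: "\<And>g. continuous_on {0..1} g \<Longrightarrow>
                 (\<lambda>n. part_integral n (P n) g) \<longlonglongrightarrow> integral\<^sup>L \<mu> g"
    and f_meas: "f \<in> borel_measurable borel"
    and f_nonneg: "AE y in lborel. y \<in> {0<..<1} \<longrightarrow> f y \<ge> 0"
    and f_int: "set_integrable lborel {0<..<1} f"
    and N_borel: "N \<in> sets borel" and N_sub: "N \<subseteq> {0..1}"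
    and N_null: "emeasure lborel N = 0"
    and decomp: "\<And>A. A \<in> sets \<mu> \<Longrightarrow>
                   emeasure \<mu> A = (\<integral>\<^sup>+ y. ennreal (f y) * indicator (A - N) y \<partial>lborel) + emeasure \<mu> (A \<inter> N)"
    and x0_in: "x0 \<in> {0<..<1}"
    and leb: "lebesgue_point f x0"
    and fpos: "f x0 > 0"
  shows "density_tends (accum_points P) x0 1 \<and> density_tends (nonaccum_points P) x0 0"
proof -
  interpret lsetup P \<mu> f N
    by (rule lsetup.intro) (fact part prob sets_mu space_mu weak f_meas f_nonneg f_int N_borel N_sub N_null decomp)+
  show ?thesis
  proof
    show "density_tends (accum_points P) x0 1" unfolding density_tends_def
    proof (intro allI impI)
      fix e :: real assume e: "e > 0"
      obtain d where d: "d > 0" and H: "\<And>a b. a < x0 \<and> x0 < b \<and> b - a < d \<Longrightarrow>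
          {a<..<b} \<subseteq> {0<..<1} \<and> 0 \<le> measure lebesgue (nonaccum_points P \<inter> {a<..<b})
          \<and> measure lebesgue (nonaccum_points P \<inter> {a<..<b}) < (b - a) * e
          \<and> measure lebesgue (accum_points P \<inter> {a<..<b}) = (b - a) - measure lebesgue (nonaccum_points P \<inter> {a<..<b})"
        using key[OF x0_in leb fpos e] by blast
      show "\<exists>d>0. \<forall>a b. a < x0 \<and> x0 < b \<and> b - a < d \<longrightarrow>
          \<bar>measure lebesgue (accum_points P \<inter> {a<..<b}) / (b - a) - 1\<bar> < e"
      proof (intro exI[of _ d] conjI d allI impI)
        fix a b assume ab: "a < x0 \<and> x0 < b \<and> b - a < d"
        define m where "m = measure lebesgue (nonaccum_points P \<inter> {a<..<b})"
        have h: "0 \<le> m" "m < (b - a) * e"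
          "measure lebesgue (accum_points P \<inter> {a<..<b}) = (b - a) - m"
          using H[OF ab] unfolding m_def by auto
        have ba: "b - a > 0" using ab by simp
        have "measure lebesgue (accum_points P \<inter> {a<..<b}) / (b - a) - 1 = - (m / (b - a))"
          using ba unfolding h(3) by (simp add: field_simps)
        moreover have "m / (b - a) < e" using h ba by (simp add: field_simps)
        moreover have "0 \<le> m / (b - a)" using h ba by simp
        ultimately show "\<bar>measure lebesgue (accum_points P \<inter> {a<..<b}) / (b - a) - 1\<bar> < e"
          by (metis abs_minus_cancel abs_of_nonneg)
      qed
    qed
    show "density_tends (nonaccum_points P) x0 0" unfolding density_tends_def
    proof (intro allI impI)
      fix e :: real assume e: "e > 0"
      obtain d where d: "d > 0" and H: "\<And>a b. a < x0 \<and> x0 < b \<and> b - a < d \<Longrightarrow>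
          {a<..<b} \<subseteq> {0<..<1} \<and> 0 \<le> measure lebesgue (nonaccum_points P \<inter> {a<..<b})
          \<and> measure lebesgue (nonaccum_points P \<inter> {a<..<b}) < (b - a) * e
          \<and> measure lebesgue (accum_points P \<inter> {a<..<b}) = (b - a) - measure lebesgue (nonaccum_points P \<inter> {a<..<b})"
        using key[OF x0_in leb fpos e] by blast
      show "\<exists>d>0. \<forall>a b. a < x0 \<and> x0 < b \<and> b - a < d \<longrightarrow>
          \<bar>measure lebesgue (nonaccum_points P \<inter> {a<..<b}) / (b - a) - 0\<bar> < e"
      proof (intro exI[of _ d] conjI d allI impI)
        fix a b assume ab: "a < x0 \<and> x0 < b \<and> b - a < d"
        define m where "m = measure lebesgue (nonaccum_points P \<inter> {a<..<b})"
        have h: "0 \<le> m" "m < (b - a) * e"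
          using H[OF ab] unfolding m_def by auto
        have ba: "b - a > 0" using ab by simp
        have "m / (b - a) < e" using h ba by (simp add: field_simps)
        moreover have "0 \<le> m / (b - a)" using h ba by simp
        ultimately show "\<bar>measure lebesgue (nonaccum_points P \<inter> {a<..<b}) / (b - a) - 0\<bar> < e"
          unfolding m_def by (metis abs_of_nonneg diff_zero)
      qed
    qed
  qed
qed


end
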